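(* Consider a market in which every hospital's utility is proportional to total wage, i.e. for each $h\in H$ there is $\gamma_h>0$ with $f_h(Y)=\gamma_h w_h(Y)$ for all $Y\subseteq X_h$. For each $h$, let $\mathrm{Ch}_h$ be the choice function that, given $X'\subseteq X_h$ (with $\mathrm{Ch}_h(\emptyset)=\emptyset$), sorts $X'$ in non-decreasing order of wage (ties broken by a fixed order) as $x^{(1)},\dots,x^{(|X'|)}$, sets $Y=\{x^{(|X'|)}\}$, for $i=1,\dots,|X'|-1$ adds $x^{(i)}$ to $Y$ if $w_h(Y\cup\{x^{(i)}\})<1.5\,B_h$, and returns $Y$. Then the generalized deferred acceptance mechanism with these choice functions produces a $B'_H$-stable matching for some $B'_H$ with $B_h\le B'_h\le1.5\,B_h$ for every $h\in H$.
   Context: A market consists of a finite set of doctors $D$, a finite set of hospitals $H$, a finite set of contracts $X\subseteq D\times H\times\mathbb{R}_{>0}$ (contract $x=(d,h,w)$ has doctor $x_D=d$, hospital $x_H=h$, wage $x_W=w$), strict preferences $\succ_d$ of each doctor $d$ over $X_d\cup\{\emptyset\}$, utilities $f_h$ of each hospital on subsets of $X_h$, and budgets $B_h>0$ with $0<x_W\le B_h$ for all $x\in X_h$. For $Y\subseteq X$: $Y_d=\{x\in Y:x_D=d\}$, $Y_h=\{x\in Y:x_H=h\}$, $w_h(Y)=\sum_{x\in Y_h}x_W$. A matching is $Y\subseteq X$ with $|Y_d|\le1$ for all $d$. Given $B'_H=(B'_h)_h$, a matching $Y$ is $B'_H$-feasible if $w_h(Y)\le B'_h$ for all $h$; a matching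 $Z\subseteq X_h$ blocks $Y$ if every doctor $x_D$ with $x\in Z\setminus Y$ strictly prefers $x$ to her contract in $Y$ (or to $\emptyset$), $f_h(Z)>f_h(Y_h)$ and $w_h(Z)\le B'_h$; $Y$ is $B'_H$-stable if it is $B'_H$-feasible and not blocked by any $h$ and $Z\subseteq X_h$. Generalized deferred acceptance with hospital choice functions $\mathrm{Ch}_h$: let $\mathrm{Ch}_H(Y)=\bigcup_h\mathrm{Ch}_h(Y_h)$; $\mathrm{Ch}_d(Y)=\{x\}$ for the $\succ_d$-best $x\in Y_d$ if $x\succ_d\emptyset$, else $\emptyset$; $\mathrm{Ch}_D(Y)=\bigcup_d\mathrm{Ch}_d(Y_d)$. Set $R^{(0)}=\emptyset$; for $i=1,2,\dots$: $Y^{(i)}=\mathrm{Ch}_D(X\setminus R^{(i-1)})$, $Z^{(i)}=\mathrm{Ch}_H(Y^{(i)})$, $R^{(i)}=R^{(i-1)}\cup(Y^{(i)}\setminus Z^{(i)})$; if $Y^{(i)}=Z^{(i)}$, output $Y^{(i)}$. *)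

theory Defs
  imports Complex_Main
begin

type_synonym ('d, 'h) contract = "'d \<times> 'h \<times> real"

definition cD :: "('d, 'h) contract \<Rightarrow> 'd" where "cD x = fst x"
definition cH :: "('d, 'h) contract \<Rightarrow> 'h" where "cH x = fst (snd x)"
definition cW :: "('d, 'h) contract \<Rightarrow> real" where "cW x = snd (snd x)"

definition Yd :: "('d, 'h) contract set \<Rightarrow> 'd \<Rightarrow> ('d, 'h) contract set" where
  "Yd Y d = {x \<in> Y. cD x = d}"
definition Yh :: "('d, 'h) contract set \<Rightarrow> 'h \<Rightarrow> ('d, 'h) contract set" where
  "Yh Y h = {x \<in> Y. cH x = h}"
definition wh :: "'h \<Rightarrow> ('d, 'h) contract set \<Rightarrow> real" where
  "wh h Y = (\<Sum>x\<in>Yh Y h. cW x)"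

text \<open>The market: doctors D, hospitals H, contracts X, strict doctor preferences
  (pref d is the strict relation \<open>\<succ>_d\<close> on X_d \<union> {\<emptyset>}, \<emptyset> rendered as None),
  hospital utilities f, budgets B.\<close>
definition market ::
  "'d set \<Rightarrow> 'h set \<Rightarrow> ('d, 'h) contract set \<Rightarrow>
   ('d \<Rightarrow> (('d, 'h) contract option \<times> ('d, 'h) contract option) set) \<Rightarrow>
   ('h \<Rightarrow> ('d, 'h) contract set \<Rightarrow> real) \<Rightarrow> ('h \<Rightarrow> real) \<Rightarrow> bool" where
  "market D H X pref f B \<longleftrightarrow>
     finite D \<and> finite H \<and> finite X \<and>
     X \<subseteq> D \<times> H \<times> {w. w > 0} \<and>
     (\<forall>d\<in>D. strict_linear_order_on (insert None (Some ` Yd X d)) (pref d) \<and>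
             pref d \<subseteq> (insert None (Some ` Yd X d)) \<times> (insert None (Some ` Yd X d))) \<and>
     (\<forall>h\<in>H. B h > 0) \<and>
     (\<forall>x\<in>X. 0 < cW x \<and> cW x \<le> B (cH x))"

definition is_matching :: "'d set \<Rightarrow> ('d, 'h) contract set \<Rightarrow> bool" where
  "is_matching D Y \<longleftrightarrow> (\<forall>d\<in>D. card (Yd Y d) \<le> 1) \<and> (\<forall>x\<in>Y. cD x \<in> D) \<and> finite Y"

definition cur :: "('d, 'h) contract set \<Rightarrow> 'd \<Rightarrow> ('d, 'h) contract option" where
  "cur Y d = (if Yd Y d = {} then None else Some (the_elem (Yd Y d)))"

definition feasible :: "'d set \<Rightarrow> 'h set \<Rightarrow> ('d, 'h) contract set \<Rightarrow> ('h \<Rightarrow> real)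
    \<Rightarrow> ('d, 'h) contract set \<Rightarrow> bool" where
  "feasible D H X B' Y \<longleftrightarrow> Y \<subseteq> X \<and> is_matching D Y \<and> (\<forall>h\<in>H. wh h Y \<le> B' h)"

definition blocks ::
  "'d set \<Rightarrow> ('d, 'h) contract set \<Rightarrow>
   ('d \<Rightarrow> (('d, 'h) contract option \<times> ('d, 'h) contract option) set) \<Rightarrow>
   ('h \<Rightarrow> ('d, 'h) contract set \<Rightarrow> real) \<Rightarrow> ('h \<Rightarrow> real) \<Rightarrow>
   'h \<Rightarrow> ('d, 'h) contract set \<Rightarrow> ('d, 'h) contract set \<Rightarrow> bool" where
  "blocks D X pref f B' h Z Y \<longleftrightarrow>
     Z \<subseteq> Yh X h \<and> is_matching D Z \<and>
     (\<forall>x\<in>Z - Y. (Some x, cur Y (cD x)) \<in> pref (cD x)) \<and>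
     f h Z > f h (Yh Y h) \<and> wh h Z \<le> B' h"

definition stable ::
  "'d set \<Rightarrow> 'h set \<Rightarrow> ('d, 'h) contract set \<Rightarrow>
   ('d \<Rightarrow> (('d, 'h) contract option \<times> ('d, 'h) contract option) set) \<Rightarrow>
   ('h \<Rightarrow> ('d, 'h) contract set \<Rightarrow> real) \<Rightarrow> ('h \<Rightarrow> real) \<Rightarrow>
   ('d, 'h) contract set \<Rightarrow> bool" where
  "stable D H X pref f B' Y \<longleftrightarrow> feasible D H X B' Y \<and>
     \<not> (\<exists>h\<in>H. \<exists>Z. blocks D X pref f B' h Z Y)"

definition ChD ::
  "'d set \<Rightarrow> ('d \<Rightarrow> (('d, 'h) contract option \<times> ('d, 'h) contract option) set) \<Rightarrow>
   ('d, 'h) contract set \<Rightarrow> ('d, 'h) contract set" where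
  "ChD D pref Y = (\<Union>d\<in>D. {x \<in> Yd Y d. (Some x, None) \<in> pref d \<and>
       (\<forall>y\<in>Yd Y d. y \<noteq> x \<longrightarrow> (Some x, Some y) \<in> pref d)})"

definition key_less :: "(('d, 'h) contract \<times> ('d, 'h) contract) set \<Rightarrow>
    ('d, 'h) contract \<Rightarrow> ('d, 'h) contract \<Rightarrow> bool" where
  "key_less tie a b \<longleftrightarrow> cW a < cW b \<or> (cW a = cW b \<and> (a, b) \<in> tie)"

definition sort_by :: "('a \<Rightarrow> 'a \<Rightarrow> bool) \<Rightarrow> 'a set \<Rightarrow> 'a list" where
  "sort_by lt A = (THE xs. set xs = A \<and> sorted_wrt lt xs)"

definition greedy :: "real \<Rightarrow> ('d, 'h) contract list \<Rightarrow> ('d, 'h) contract set" where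
  "greedy bound xs = (if xs = [] then {} else
     foldl (\<lambda>Y x. if (\<Sum>y\<in>insert x Y. cW y) < bound then insert x Y else Y)
       {last xs} (butlast xs))"

definition Chh :: "('h \<Rightarrow> (('d, 'h) contract \<times> ('d, 'h) contract) set) \<Rightarrow> ('h \<Rightarrow> real) \<Rightarrow>
    'h \<Rightarrow> ('d, 'h) contract set \<Rightarrow> ('d, 'h) contract set" where
  "Chh tie B h X' = greedy (3/2 * B h) (sort_by (key_less (tie h)) X')"

definition ChH :: "'h set \<Rightarrow> ('h \<Rightarrow> (('d, 'h) contract \<times> ('d, 'h) contract) set) \<Rightarrow>
    ('h \<Rightarrow> real) \<Rightarrow> ('d, 'h) contract set \<Rightarrow> ('d, 'h) contract set" where
  "ChH H tie B Y = (\<Union>h\<in>H. Chh tie B h (Yh Y h))"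

text \<open>Generalized deferred acceptance. DA_R i is R^(i); the proposals of round i+1
  are DA_Y i = Y^(i+1) and the accepted ones DA_Z i = Z^(i+1).\<close>
fun DA_R :: "'d set \<Rightarrow> 'h set \<Rightarrow> ('d, 'h) contract set \<Rightarrow>
   ('d \<Rightarrow> (('d, 'h) contract option \<times> ('d, 'h) contract option) set) \<Rightarrow>
   ('h \<Rightarrow> (('d, 'h) contract \<times> ('d, 'h) contract) set) \<Rightarrow> ('h \<Rightarrow> real) \<Rightarrow>
   nat \<Rightarrow> ('d, 'h) contract set" where
  "DA_R D H X pref tie B 0 = {}"
| "DA_R D H X pref tie B (Suc i) =
     (let Yi = ChD D pref (X - DA_R D H X pref tie B i)
      in DA_R D H X pref tie B i \<union> (Yi - ChH H tie B Yi))"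

definition DA_Y where
  "DA_Y D H X pref tie B i = ChD D pref (X - DA_R D H X pref tie B i)"
definition DA_Z where
  "DA_Z D H X pref tie B i = ChH H tie B (DA_Y D H X pref tie B i)"

end

theory Submission
  imports Defs
begin


lemma sorted_wrt_distinct_irr:
  assumes "\<And>a. \<not> lt a a" "sorted_wrt lt xs" shows "distinct xs"
  using assms(2) by (induction xs) (auto simp: assms(1))

lemma sorted_wrt_unique:
  fixes lt :: "'a \<Rightarrow> 'a \<Rightarrow> bool"
  assumes irr0: "\<forall>a. \<not> lt a a" and tr0: "\<forall>a b c. lt a b \<longrightarrow> lt b c \<longrightarrow> lt a c"
  shows "sorted_wrt lt xs \<Longrightarrow> sorted_wrt lt ys \<Longrightarrow> set xs = set ys \<Longrightarrow> xs = ys"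
proof (induction xs arbitrary: ys)
  case Nil then show ?case by simp
next
  case (Cons a xs)
  then obtain b ys' where ys: "ys = b # ys'" by (cases ys) auto
  have ab: "a = b"
  proof (rule ccontr)
    assume "a \<noteq> b"
    then have "b \<in> set xs" "a \<in> set ys'" using Cons.prems ys by auto
    then have "lt a b" "lt b a" using Cons.prems ys by auto
    then show False using irr0[rule_format] tr0[rule_format] by blast
  qed
  have "a \<notin> set xs" using Cons.prems(1) irr0[rule_format] by auto
  moreover have "b \<notin> set ys'" using Cons.prems(2) ys irr0[rule_format] by auto
  ultimately have "set xs = set ys'" using Cons.prems(3) ys ab by auto
  then have "xs = ys'" using Cons ys by auto
  then show ?case using ab ys by simp
qed

lemma sorted_wrt_exists:
  fixes lt :: "'a \<Rightarrow> 'a \<Rightarrow> bool"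
  assumes irr0: "\<forall>a. \<not> lt a a" and tr0: "\<forall>a b c. lt a b \<longrightarrow> lt b c \<longrightarrow> lt a c"
  and tot: "\<forall>a\<in>A. \<forall>b\<in>A. a \<noteq> b \<longrightarrow> lt a b \<or> lt b a" and fin: "finite A"
  shows "\<exists>xs. set xs = A \<and> sorted_wrt lt xs"
  using fin tot
proof (induction A rule: finite_induct)
  case empty then show ?case by simp
next
  case (insert a F)
  have totF: "\<forall>a\<in>F. \<forall>b\<in>F. a \<noteq> b \<longrightarrow> lt a b \<or> lt b a"
    using insert.prems by blast
  obtain xs where xs: "set xs = F" "sorted_wrt lt xs" using insert.IH[OF totF] by blast
  let ?ys = "filter (\<lambda>y. lt y a) xs @ [a] @ filter (\<lambda>y. lt a y) xs"
  have "set ?ys = insert a F"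
  proof
    show "set ?ys \<subseteq> insert a F" using xs(1) by auto
    show "insert a F \<subseteq> set ?ys"
    proof
      fix z assume z: "z \<in> insert a F"
      show "z \<in> set ?ys"
      proof (cases "z = a")
        case True then show ?thesis by simp
      next
        case False
        then have "lt z a \<or> lt a z" using insert.prems z by blast
        then show ?thesis using False z xs(1) by auto
      qed
    qed
  qed
  moreover have "sorted_wrt lt ?ys"
  proof -
    have s1: "sorted_wrt lt (filter (\<lambda>y. lt y a) xs)" using xs(2) sorted_wrt_filter by blast
    have s2: "sorted_wrt lt ([a] @ filter (\<lambda>y. lt a y) xs)" using xs(2) sorted_wrt_filter by simp
    have c: "\<forall>x\<in>set (filter (\<lambda>y. lt y a) xs). \<forall>y\<in>set ([a] @ filter (\<lambda>y. lt a y) xs). lt x y"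
    proof (intro ballI)
      fix x y assume x: "x \<in> set (filter (\<lambda>y. lt y a) xs)" and y: "y \<in> set ([a] @ filter (\<lambda>y. lt a y) xs)"
      then have xa: "lt x a" by simp
      show "lt x y"
      proof (cases "y = a")
        case True then show ?thesis using xa by simp
      next
        case False
        then have "lt a y" using y by simp
        then show ?thesis using xa tr0 by blast
      qed
    qed
    show ?thesis using s1 s2 c by (subst sorted_wrt_append) (intro conjI)
  qed
  ultimately show ?case by (intro exI[where x="?ys"] conjI)
qed

lemma sort_by_props:
  fixes lt :: "'a \<Rightarrow> 'a \<Rightarrow> bool"
  assumes irr0: "\<forall>a. \<not> lt a a" and tr0: "\<forall>a b c. lt a b \<longrightarrow> lt b c \<longrightarrow> lt a c"
  and tot: "\<forall>a\<in>A. \<forall>b\<in>A. a \<noteq> b \<longrightarrow> lt a b \<or> lt b a" and fin: "finite A"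
  shows "set (sort_by lt A) = A \<and> sorted_wrt lt (sort_by lt A)"
proof -
  have "\<exists>!xs. set xs = A \<and> sorted_wrt lt xs"
  proof -
    obtain xs where "set xs = A \<and> sorted_wrt lt xs" using sorted_wrt_exists[of lt A, OF irr0 tr0 tot fin] by blast
    moreover have "\<And>ys. set ys = A \<and> sorted_wrt lt ys \<Longrightarrow> ys = xs"
      using sorted_wrt_unique[of lt, OF irr0 tr0] calculation by metis
    ultimately show ?thesis by blast
  qed
  then show ?thesis unfolding sort_by_def by (rule theI')
qed

definition gstep :: "real \<Rightarrow> ('d, 'h) contract set \<Rightarrow> ('d, 'h) contract \<Rightarrow> ('d, 'h) contract set" where
  "gstep b Y x = (if (\<Sum>y\<in>insert x Y. cW y) < b then insert x Y else Y)"

lemma greedy_alt: "greedy b xs = (if xs = [] then {} else foldl (gstep b) {last xs} (butlast xs))"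
  unfolding greedy_def gstep_def[abs_def] by simp

lemma fold_sup: "T \<subseteq> foldl (gstep b) T ys"
  by (induction ys arbitrary: T) (auto simp: gstep_def, blast)

lemma fold_sub: "foldl (gstep b) T ys \<subseteq> T \<union> set ys"
proof (induction ys arbitrary: T)
  case Nil then show ?case by simp
next
  case (Cons a ys)
  have "gstep b T a \<subseteq> insert a T" by (auto simp: gstep_def)
  then show ?case using Cons.IH[of "gstep b T a"] by auto
qed

lemma fold_sum: "(\<Sum>y\<in>T. cW y) < b \<Longrightarrow> (\<Sum>y\<in>foldl (gstep b) T ys. cW y) < b"
  by (induction ys arbitrary: T) (auto simp: gstep_def)

lemma fold_rej:
  assumes irr0: "\<forall>a. \<not> lt a a" and tr0: "\<forall>a b c. lt a b \<longrightarrow> lt b c \<longrightarrow> lt a c"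
  shows "sorted_wrt lt ys \<Longrightarrow> T \<inter> set ys = {} \<Longrightarrow> y \<in> set ys \<Longrightarrow>
    y \<notin> foldl (gstep b) T ys \<Longrightarrow>
    b \<le> (\<Sum>z\<in>insert y (T \<union> {z \<in> foldl (gstep b) T ys \<inter> set ys. lt z y}). cW z)"
proof (induction ys arbitrary: T)
  case Nil then show ?case by simp
next
  case (Cons a ys)
  let ?T1 = "gstep b T a"
  let ?F = "foldl (gstep b) ?T1 ys"
  have Fdef: "foldl (gstep b) T (a # ys) = ?F" by simp
  have aT: "a \<notin> T" using Cons.prems by auto
  have ays: "a \<notin> set ys" by (metis Cons.prems(1) irr0[rule_format] sorted_wrt.simps(2))
  have T1sub: "?T1 \<subseteq> ?F" by (rule fold_sup)
  have Fsub: "?F \<subseteq> ?T1 \<union> set ys" by (rule fold_sub)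
  show ?case
  proof (cases "y = a")
    case True
    have rej: "\<not> (\<Sum>z\<in>insert a T. cW z) < b"
    proof
      assume "(\<Sum>z\<in>insert a T. cW z) < b"
      then have "?T1 = insert a T" by (simp add: gstep_def)
      then have "a \<in> ?F" using T1sub by auto
      then show False using Cons.prems(4) True Fdef by simp
    qed
    have E: "{z \<in> ?F \<inter> set (a # ys). lt z y} = {}"
    proof -
      have "\<not> lt z a" if "z \<in> set (a # ys)" for z
      proof (cases "z = a")
        case True then show ?thesis using irr0 by blast
      next
        case False
        then have "lt a z" using that Cons.prems(1) by simp
        then show ?thesis using irr0 tr0 by blast
      qed
      then show ?thesis using True by blast
    qed
    have E': "{z \<in> foldl (gstep b) T (a # ys) \<inter> set (a # ys). lt z y} = {}"
      by (simp only: Fdef E)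
    show ?thesis by (subst E') (use rej True in simp)
  next
    case False
    then have yys: "y \<in> set ys" using Cons.prems by auto
    have T1ys: "?T1 \<inter> set ys = {}" using Cons.prems(2) ays by (auto simp: gstep_def)
    have IH: "b \<le> (\<Sum>z\<in>insert y (?T1 \<union> {z \<in> ?F \<inter> set ys. lt z y}). cW z)"
      using Cons.IH[OF _ T1ys yys] Cons.prems by auto
    have lay: "lt a y" using Cons.prems(1) yys by auto
    have "?T1 \<union> {z \<in> ?F \<inter> set ys. lt z y} = T \<union> {z \<in> ?F \<inter> set (a # ys). lt z y}"
    proof (cases "(\<Sum>z\<in>insert a T. cW z) < b")
      case True
      then have "?T1 = insert a T" by (simp add: gstep_def)
      then show ?thesis using T1sub lay by auto
    next
      case c: False
      then have "?T1 = T" by (simp add: gstep_def)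
      then have "a \<notin> ?F" using Fsub aT ays by auto
      then show ?thesis using \<open>?T1 = T\<close> by auto
    qed
    then show ?thesis using IH by simp
  qed
qed




lemma greedy_props:
  fixes lt :: "('d,'h) contract \<Rightarrow> ('d,'h) contract \<Rightarrow> bool"
  assumes irr0: "\<forall>a. \<not> lt a a" and tr0: "\<forall>a b c. lt a b \<longrightarrow> lt b c \<longrightarrow> lt a c"
  and tot: "\<forall>a\<in>S. \<forall>b\<in>S. a \<noteq> b \<longrightarrow> lt a b \<or> lt b a" and fin: "finite S"
  shows "greedy b (sort_by lt S) \<subseteq> S"
    and "S \<noteq> {} \<Longrightarrow> \<exists>M\<in>S. M \<in> greedy b (sort_by lt S) \<and> (\<forall>y\<in>S. y \<noteq> M \<longrightarrow> lt y M) \<and>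
          (\<forall>y\<in>S - greedy b (sort_by lt S). b \<le> cW y + cW M + (\<Sum>z\<in>{z \<in> greedy b (sort_by lt S). lt z y}. cW z)) \<and>
          (cW M < b \<longrightarrow> (\<Sum>z\<in>greedy b (sort_by lt S). cW z) < b)"
proof -
  define xs where "xs = sort_by lt S"
  define G where "G = greedy b xs"
  have xs: "set xs = S" "sorted_wrt lt xs" using sort_by_props[of lt S, OF irr0 tr0 tot fin] xs_def by auto
  have dist: "distinct xs" using sorted_wrt_distinct_irr[of lt xs] irr0 xs(2) by blast
  show "greedy b (sort_by lt S) \<subseteq> S"
  proof (cases "xs = []")
    case True then show ?thesis by (simp add: xs_def[symmetric] greedy_alt)
  next
    case False
    then have "greedy b xs \<subseteq> {last xs} \<union> set (butlast xs)"
      using fold_sub[of b "{last xs}" "butlast xs"] by (simp add: greedy_alt)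
    also have "\<dots> \<subseteq> S" using xs(1) False
      by (metis Un_subset_iff append_butlast_last_id empty_subsetI insert_subset last_in_set set_append subsetI)
    finally show ?thesis using xs_def by simp
  qed
  then have GS: "G \<subseteq> S" using G_def xs_def by simp
  assume "S \<noteq> {}"
  then have ne: "xs \<noteq> []" using xs(1) by auto
  define M where "M = last xs"
  define bl where "bl = butlast xs"
  have xsd: "xs = bl @ [M]" using ne M_def bl_def by simp
  have Gd: "G = foldl (gstep b) {M} bl" using G_def ne M_def bl_def by (simp add: greedy_alt)
  have MS: "M \<in> S" using xs(1) xsd by auto
  have MG: "M \<in> G" using Gd fold_sup by blast
  have Mbl: "M \<notin> set bl" using dist xsd by simp
  have ltM: "\<forall>y\<in>set bl. lt y M" using xs(2) xsd by (simp add: sorted_wrt_append)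
  have Sd: "S = insert M (set bl)" using xs(1) xsd by auto
  have big: "\<forall>y\<in>S. y \<noteq> M \<longrightarrow> lt y M" using ltM Sd by auto
  have finG: "finite G" using GS fin finite_subset by blast
  have rej: "\<forall>y\<in>S - G. b \<le> cW y + cW M + (\<Sum>z\<in>{z \<in> G. lt z y}. cW z)"
  proof
    fix y assume y: "y \<in> S - G"
    then have yM: "y \<noteq> M" using MG by auto
    then have ybl: "y \<in> set bl" using y Sd by auto
    have sbl: "sorted_wrt lt bl" using xs(2) xsd by (simp add: sorted_wrt_append)
    have nMy: "\<not> lt M y"
    proof
      assume "lt M y"
      moreover have "lt y M" using ltM ybl by blast
      ultimately have "lt M M" using tr0 by blast
      then show False using irr0 by blast
    qed
    have "b \<le> (\<Sum>z\<in>insert y ({M} \<union> {z \<in> G \<inter> set bl. lt z y}). cW z)"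
      using fold_rej[of lt bl "{M}" y b, OF irr0 tr0 sbl] Mbl ybl y Gd by auto
    moreover have "{z \<in> G \<inter> set bl. lt z y} = {z \<in> G. lt z y}"
      using GS Sd nMy by auto
    moreover have "M \<notin> {z \<in> G. lt z y}" using nMy by simp
    moreover have "y \<notin> insert M {z \<in> G. lt z y}" using yM irr0 by blast
    ultimately show "b \<le> cW y + cW M + (\<Sum>z\<in>{z \<in> G. lt z y}. cW z)"
      using finG by (simp add: add.assoc)
  qed
  have sm: "cW M < b \<longrightarrow> (\<Sum>z\<in>G. cW z) < b"
    using fold_sum[of "{M}" b bl] Gd by simp
  show "\<exists>M\<in>S. M \<in> greedy b (sort_by lt S) \<and> (\<forall>y\<in>S. y \<noteq> M \<longrightarrow> lt y M) \<and>
          (\<forall>y\<in>S - greedy b (sort_by lt S). b \<le> cW y + cW M + (\<Sum>z\<in>{z \<in> greedy b (sort_by lt S). lt z y}. cW z)) \<and>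
          (cW M < b \<longrightarrow> (\<Sum>z\<in>greedy b (sort_by lt S). cW z) < b)"
    using MS MG big rej sm G_def xs_def by blast
qed




lemma Yh_iff: "x \<in> Yh A h \<longleftrightarrow> x \<in> A \<and> cH x = h" by (simp add: Yh_def)
lemma Yd_iff: "x \<in> Yd A d \<longleftrightarrow> x \<in> A \<and> cD x = d" by (simp add: Yd_def)

lemma max_exists:
  fixes P :: "'a \<Rightarrow> 'a \<Rightarrow> bool"
  assumes irr0: "\<forall>a. \<not> P a a" and tr0: "\<forall>a b c. P a b \<longrightarrow> P b c \<longrightarrow> P a c"
  and tot: "\<forall>a\<in>A. \<forall>b\<in>A. a \<noteq> b \<longrightarrow> P a b \<or> P b a" and fin: "finite A" and ne: "A \<noteq> {}"
  shows "\<exists>a\<in>A. \<forall>b\<in>A. b \<noteq> a \<longrightarrow> P a b"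
proof -
  define xs where "xs = sort_by P A"
  have xs: "set xs = A" "sorted_wrt P xs" using sort_by_props[of P A, OF irr0 tr0 tot fin] xs_def by auto
  then obtain a ys where "xs = a # ys" using ne by (cases xs) auto
  then show ?thesis using xs by auto
qed

locale da =
  fixes D :: "'d set" and H :: "'h set" and X :: "('d, 'h) contract set"
    and pref :: "'d \<Rightarrow> (('d, 'h) contract option \<times> ('d, 'h) contract option) set"
    and f :: "'h \<Rightarrow> ('d, 'h) contract set \<Rightarrow> real" and B :: "'h \<Rightarrow> real"
    and \<gamma> :: "'h \<Rightarrow> real"
    and tie :: "'h \<Rightarrow> (('d, 'h) contract \<times> ('d, 'h) contract) set"
  assumes mkt: "market D H X pref f B"
    and gamma_pos: "\<forall>h\<in>H. \<gamma> h > 0"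
    and f_prop: "\<forall>h\<in>H. \<forall>Y. Y \<subseteq> Yh X h \<longrightarrow> f h Y = \<gamma> h * wh h Y"
    and tie_order: "\<forall>h\<in>H. strict_linear_order_on (Yh X h) (tie h)"
begin

lemma finX: "finite X" using mkt by (simp add: market_def)

lemma X_props: "x \<in> X \<Longrightarrow> cD x \<in> D \<and> cH x \<in> H \<and> 0 < cW x \<and> cW x \<le> B (cH x)"
proof -
  assume x: "x \<in> X"
  have 1: "X \<subseteq> D \<times> H \<times> {w. w > 0}" using mkt unfolding market_def by blast
  have 2: "\<forall>x\<in>X. 0 < cW x \<and> cW x \<le> B (cH x)" using mkt unfolding market_def by blast
  obtain d h w where xd: "x = (d, h, w)" by (cases x) auto
  have "d \<in> D" "h \<in> H" using 1 x xd by auto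
  moreover have "0 < cW x \<and> cW x \<le> B (cH x)" using 2 x by blast
  moreover have "cD x = d" "cH x = h" by (simp_all add: xd cD_def cH_def)
  ultimately show ?thesis by simp
qed

lemma B_pos: "h \<in> H \<Longrightarrow> 0 < B h" using mkt by (simp add: market_def)

lemma pref_ord: "d \<in> D \<Longrightarrow> strict_linear_order_on (insert None (Some ` Yd X d)) (pref d)"
  using mkt by (simp add: market_def)

lemma lt_irr: "h \<in> H \<Longrightarrow> \<forall>a. \<not> key_less (tie h) a a"
  using tie_order by (auto simp: key_less_def strict_linear_order_on_def dest: irreflD)

lemma lt_tr: "h \<in> H \<Longrightarrow> \<forall>a b c. key_less (tie h) a b \<longrightarrow> key_less (tie h) b c \<longrightarrow> key_less (tie h) a c"
proof -
  assume "h \<in> H"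
  then have "trans (tie h)" using tie_order by (simp add: strict_linear_order_on_def)
  show ?thesis
  proof (intro allI impI)
    fix a b c assume ab: "key_less (tie h) a b" and bc: "key_less (tie h) b c"
    show "key_less (tie h) a c"
    proof (cases "cW a < cW b \<or> cW b < cW c")
      case True then show ?thesis using ab bc unfolding key_less_def by auto
    next
      case False
      then have "(a, b) \<in> tie h" "(b, c) \<in> tie h" "cW a = cW b" "cW b = cW c"
        using ab bc unfolding key_less_def by auto
      then have "(a, c) \<in> tie h" using \<open>trans (tie h)\<close> transD by metis
      then show ?thesis using \<open>cW a = cW b\<close> \<open>cW b = cW c\<close> unfolding key_less_def by simp
    qed
  qed
qed

lemma lt_tot: "h \<in> H \<Longrightarrow> S \<subseteq> Yh X h \<Longrightarrow> \<forall>a\<in>S. \<forall>b\<in>S. a \<noteq> b \<longrightarrow> key_less (tie h) a b \<or> key_less (tie h) b a"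
proof -
  assume h: "h \<in> H" and S: "S \<subseteq> Yh X h"
  then have "total_on (Yh X h) (tie h)" using tie_order by (simp add: strict_linear_order_on_def)
  show ?thesis
  proof (intro ballI impI)
    fix a b assume a: "a \<in> S" and b: "b \<in> S" and ab: "a \<noteq> b"
    have "(a, b) \<in> tie h \<or> (b, a) \<in> tie h"
      using \<open>total_on (Yh X h) (tie h)\<close> a b ab S unfolding total_on_def by blast
    then show "key_less (tie h) a b \<or> key_less (tie h) b a"
      unfolding key_less_def by linarith
  qed
qed

lemma lt_le: "key_less r a b \<Longrightarrow> cW a \<le> cW b" by (auto simp: key_less_def)

lemma Chh_props:
  assumes h: "h \<in> H" and S: "S \<subseteq> Yh X h"
  shows "Chh tie B h S \<subseteq> S"
    and "(\<Sum>z\<in>Chh tie B h S. cW z) \<le> 3/2 * B h"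
    and "S \<noteq> {} \<Longrightarrow> \<exists>M\<in>S. M \<in> Chh tie B h S \<and> (\<forall>y\<in>S. y \<noteq> M \<longrightarrow> key_less (tie h) y M) \<and>
          (\<forall>y\<in>S - Chh tie B h S. 3/2 * B h \<le> cW y + cW M + (\<Sum>z\<in>{z \<in> Chh tie B h S. key_less (tie h) z y}. cW z))"
proof -
  have "Yh X h \<subseteq> X" by (auto simp: Yh_iff)
  then have fin: "finite S" using finite_subset[OF subset_trans[OF S] finX] by blast
  note gp = greedy_props[of "key_less (tie h)" S "3/2 * B h", OF lt_irr[OF h] lt_tr[OF h] lt_tot[OF h S] fin]
  show sub: "Chh tie B h S \<subseteq> S" using gp(1) by (simp add: Chh_def)
  show "S \<noteq> {} \<Longrightarrow> \<exists>M\<in>S. M \<in> Chh tie B h S \<and> (\<forall>y\<in>S. y \<noteq> M \<longrightarrow> key_less (tie h) y M) \<and>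
          (\<forall>y\<in>S - Chh tie B h S. 3/2 * B h \<le> cW y + cW M + (\<Sum>z\<in>{z \<in> Chh tie B h S. key_less (tie h) z y}. cW z))"
    using gp(2) unfolding Chh_def by blast
  show "(\<Sum>z\<in>Chh tie B h S. cW z) \<le> 3/2 * B h"
  proof (cases "S = {}")
    case True then show ?thesis using sub B_pos[OF h] by simp
  next
    case False
    then obtain M where M: "M \<in> S" "cW M < 3/2 * B h \<longrightarrow> (\<Sum>z\<in>Chh tie B h S. cW z) < 3/2 * B h"
      using gp(2) unfolding Chh_def by blast
    have "M \<in> X" "cH M = h" using M(1) S by (auto simp: Yh_iff)
    then have "cW M \<le> B h" using X_props[of M] by simp
    then have "cW M < 3/2 * B h" using B_pos[OF h] by simp
    then show ?thesis using M(2) by simp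
  qed
qed

end



context da begin

abbreviation "RR k \<equiv> DA_R D H X pref tie B k"
abbreviation "YY k \<equiv> DA_Y D H X pref tie B k"
abbreviation "ZZ k \<equiv> DA_Z D H X pref tie B k"

lemma ChD_sub: "ChD D pref Y \<subseteq> Y" unfolding ChD_def Yd_def by auto

lemma R_Suc: "RR (Suc k) = RR k \<union> (YY k - ZZ k)"
  by (simp add: DA_Y_def DA_Z_def Let_def)

lemma Y_sub: "YY k \<subseteq> X - RR k"
  unfolding DA_Y_def by (rule ChD_sub)

lemma ChH_sub: "Y \<subseteq> X \<Longrightarrow> ChH H tie B Y \<subseteq> Y"
proof
  fix x assume Y: "Y \<subseteq> X" and x: "x \<in> ChH H tie B Y"
  then obtain h where h: "h \<in> H" "x \<in> Chh tie B h (Yh Y h)" unfolding ChH_def by blast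
  have "Yh Y h \<subseteq> Yh X h" using Y by (auto simp: Yh_iff)
  then have "x \<in> Yh Y h" using Chh_props(1)[OF h(1)] h(2) by blast
  then show "x \<in> Y" by (simp add: Yh_iff)
qed

lemma Z_sub: "ZZ k \<subseteq> YY k"
  unfolding DA_Z_def using ChH_sub Y_sub by blast

lemma Yh_ChH: assumes Y: "Y \<subseteq> X" and h: "h \<in> H"
  shows "Yh (ChH H tie B Y) h = Chh tie B h (Yh Y h)"
proof -
  have sub: "Chh tie B h' (Yh Y h') \<subseteq> Yh Y h'" if "h' \<in> H" for h'
  proof -
    have "Yh Y h' \<subseteq> Yh X h'" using Y by (auto simp: Yh_iff)
    then show ?thesis using Chh_props(1)[OF that] by blast
  qed
  show ?thesis
  proof (intro set_eqI iffI)
    fix x assume "x \<in> Yh (ChH H tie B Y) h"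
    then obtain h' where h': "h' \<in> H" "x \<in> Chh tie B h' (Yh Y h')" "cH x = h"
      unfolding ChH_def Yh_iff by blast
    then have "cH x = h'" using sub[OF h'(1)] by (auto simp: Yh_iff)
    then show "x \<in> Chh tie B h (Yh Y h)" using h' by simp
  next
    fix x assume x: "x \<in> Chh tie B h (Yh Y h)"
    then have "cH x = h" using sub[OF h] by (auto simp: Yh_iff)
    moreover have "x \<in> ChH H tie B Y" using x h unfolding ChH_def by blast
    ultimately show "x \<in> Yh (ChH H tie B Y) h" by (simp add: Yh_iff)
  qed
qed

lemma Yh_Z: "h \<in> H \<Longrightarrow> Yh (ZZ k) h = Chh tie B h (Yh (YY k) h)"
  unfolding DA_Z_def using Yh_ChH Y_sub by blast

lemma Z_next: "ZZ k \<subseteq> YY (Suc k)"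
proof
  fix x assume xZ: "x \<in> ZZ k"
  then have "x \<in> YY k" using Z_sub by blast
  then obtain d where d: "d \<in> D" "x \<in> Yd (X - RR k) d" "(Some x, None) \<in> pref d"
    "\<forall>y\<in>Yd (X - RR k) d. y \<noteq> x \<longrightarrow> (Some x, Some y) \<in> pref d"
    unfolding DA_Y_def ChD_def by blast
  have "x \<notin> RR (Suc k)" using xZ d(2) R_Suc by (auto simp: Yd_iff)
  then have "x \<in> Yd (X - RR (Suc k)) d" using d(2) by (auto simp: Yd_iff)
  moreover have "Yd (X - RR (Suc k)) d \<subseteq> Yd (X - RR k) d" using R_Suc by (auto simp: Yd_iff)
  ultimately show "x \<in> YY (Suc k)" using d unfolding DA_Y_def ChD_def by blast
qed

lemma R_rej: "x \<in> RR k \<Longrightarrow> \<exists>j<k. x \<in> YY j - ZZ j"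
proof (induction k)
  case 0 then show ?case by simp
next
  case (Suc k)
  then show ?case using R_Suc less_SucI by blast
qed

lemma R_sub: "RR k \<subseteq> X"
proof (induction k)
  case 0 then show ?case by simp
next
  case (Suc k)
  then show ?case using R_Suc[of k] Y_sub[of k] by blast
qed

lemma da_term: "\<exists>i. YY i = ZZ i"
proof (rule ccontr)
  assume "\<not> (\<exists>i. YY i = ZZ i)"
  then have ne: "YY k \<noteq> ZZ k" for k by blast
  have "k \<le> card (RR k)" for k
  proof (induction k)
    case 0 then show ?case by simp
  next
    case (Suc k)
    obtain x where x: "x \<in> YY k" "x \<notin> ZZ k" using ne[of k] Z_sub[of k] by blast
    then have xR: "x \<notin> RR k" using Y_sub by blast
    have "insert x (RR k) \<subseteq> RR (Suc k)" using R_Suc[of k] x by blast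
    moreover have "finite (RR (Suc k))" using R_sub finX finite_subset by blast
    ultimately have "card (insert x (RR k)) \<le> card (RR (Suc k))" by (rule card_mono[rotated])
    moreover have "finite (RR k)" using R_sub finX finite_subset by blast
    ultimately show ?case using xR Suc.IH by simp
  qed
  then have "Suc (card X) \<le> card (RR (Suc (card X)))" by blast
  moreover have "card (RR (Suc (card X))) \<le> card X" using card_mono[OF finX R_sub] by blast
  ultimately show False by simp
qed

end



context da begin

lemma pref_asym: "d \<in> D \<Longrightarrow> (a, b) \<in> pref d \<Longrightarrow> (b, a) \<in> pref d \<Longrightarrow> False"
proof -
  assume d: "d \<in> D" and ab: "(a, b) \<in> pref d" and ba: "(b, a) \<in> pref d"
  have "trans (pref d)" "irrefl (pref d)" using pref_ord[OF d] by (simp_all add: strict_linear_order_on_def)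
  then show False using ab ba by (metis irreflD transD)
qed

lemma pref_trans: "d \<in> D \<Longrightarrow> (a, b) \<in> pref d \<Longrightarrow> (b, c) \<in> pref d \<Longrightarrow> (a, c) \<in> pref d"
proof -
  assume d: "d \<in> D"
  have "trans (pref d)" using pref_ord[OF d] by (simp_all add: strict_linear_order_on_def)
  then show "(a, b) \<in> pref d \<Longrightarrow> (b, c) \<in> pref d \<Longrightarrow> (a, c) \<in> pref d" by (metis transD)
qed

lemma pref_irr: "d \<in> D \<Longrightarrow> (a, a) \<notin> pref d"
proof -
  assume d: "d \<in> D"
  have "irrefl (pref d)" using pref_ord[OF d] by (simp_all add: strict_linear_order_on_def)
  then show ?thesis by (metis irreflD)
qed

lemma ChD_mem: "x \<in> ChD D pref Y \<longleftrightarrow> cD x \<in> D \<and> x \<in> Y \<and> (Some x, None) \<in> pref (cD x) \<and>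
   (\<forall>y\<in>Yd Y (cD x). y \<noteq> x \<longrightarrow> (Some x, Some y) \<in> pref (cD x))"
  unfolding ChD_def by (auto simp: Yd_iff)

lemma ChD_matching: assumes Y: "Y \<subseteq> X" shows "is_matching D (ChD D pref Y)"
proof -
  have fin: "finite (ChD D pref Y)" using finite_subset[OF subset_trans[OF ChD_sub Y] finX] .
  have "card (Yd (ChD D pref Y) d) \<le> 1" if d: "d \<in> D" for d
  proof -
    have fd: "finite (Yd (ChD D pref Y) d)" using fin by (simp add: Yd_def)
    have "\<forall>a1\<in>Yd (ChD D pref Y) d. \<forall>a2\<in>Yd (ChD D pref Y) d. a1 = a2"
    proof (intro ballI, rule ccontr)
      fix a1 a2 assume a1: "a1 \<in> Yd (ChD D pref Y) d" and a2: "a2 \<in> Yd (ChD D pref Y) d" and ne: "a1 \<noteq> a2"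
      have c1: "cD a1 = d" "a1 \<in> ChD D pref Y" using a1 by (simp_all add: Yd_iff)
      have c2: "cD a2 = d" "a2 \<in> ChD D pref Y" using a2 by (simp_all add: Yd_iff)
      have y1: "a1 \<in> Y" "a2 \<in> Y" using c1 c2 ChD_sub by blast+
      have "(Some a1, Some a2) \<in> pref d" using c1 c2 y1 ne unfolding ChD_mem by (auto simp: Yd_iff)
      moreover have "(Some a2, Some a1) \<in> pref d" using c1 c2 y1 ne unfolding ChD_mem by (auto simp: Yd_iff)
      ultimately show False using pref_asym[OF d] by blast
    qed
    then show ?thesis using card_le_Suc0_iff_eq[OF fd] by simp
  qed
  moreover have "\<forall>x\<in>ChD D pref Y. cD x \<in> D" by (simp add: ChD_mem)
  ultimately show ?thesis using fin unfolding is_matching_def by blast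
qed

lemma pref_rej:
  assumes x: "x \<in> X" and R: "R' \<subseteq> X"
    and p: "(Some x, cur (ChD D pref (X - R')) (cD x)) \<in> pref (cD x)"
  shows "x \<in> R'"
proof (rule ccontr)
  assume xR: "x \<notin> R'"
  define d where "d = cD x"
  define Y where "Y = ChD D pref (X - R')"
  have d: "d \<in> D" using X_props[OF x] d_def by simp
  have p': "(Some x, cur Y d) \<in> pref d" using p d_def Y_def by simp
  define A where "A = Yd (X - R') d"
  have xA: "x \<in> A" using x xR d_def A_def by (simp add: Yd_iff)
  show False
  proof (cases "Yd Y d = {}")
    case True
    then have pn: "(Some x, None) \<in> pref d" using p' by (simp add: cur_def)
    have finA: "finite A" unfolding A_def Yd_def using finX by simp
    have AX: "A \<subseteq> Yd X d" unfolding A_def by (auto simp: Yd_iff)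
    have tot: "\<forall>a\<in>A. \<forall>b\<in>A. a \<noteq> b \<longrightarrow> (Some a, Some b) \<in> pref d \<or> (Some b, Some a) \<in> pref d"
    proof (intro ballI impI)
      fix a b assume "a \<in> A" "b \<in> A" "a \<noteq> b"
      then have "Some a \<in> insert None (Some ` Yd X d)" "Some b \<in> insert None (Some ` Yd X d)" "Some a \<noteq> Some b"
        using AX by auto
      then show "(Some a, Some b) \<in> pref d \<or> (Some b, Some a) \<in> pref d"
        using pref_ord[OF d] unfolding strict_linear_order_on_def total_on_def by blast
    qed
    have irr: "\<forall>a. \<not> (Some a, Some a) \<in> pref d" using pref_irr[OF d] by blast
    have tr: "\<forall>a b c. (Some a, Some b) \<in> pref d \<longrightarrow> (Some b, Some c) \<in> pref d \<longrightarrow> (Some a, Some c) \<in> pref d"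
      using pref_trans[OF d] by blast
    obtain a where a: "a \<in> A" "\<forall>b\<in>A. b \<noteq> a \<longrightarrow> (Some a, Some b) \<in> pref d"
      using max_exists[of "\<lambda>a b. (Some a, Some b) \<in> pref d" A, OF irr tr tot finA] xA by blast
    have "(Some a, None) \<in> pref d"
    proof (cases "a = x")
      case True then show ?thesis using pn by simp
    next
      case False
      then have "(Some a, Some x) \<in> pref d" using a xA by metis
      then show ?thesis using pn pref_trans[OF d] by blast
    qed
    then have "a \<in> Y" unfolding Y_def ChD_mem using a d A_def by (auto simp: Yd_iff)
    then have "a \<in> Yd Y d" using a A_def by (simp add: Yd_iff)
    then show False using True by simp
  next
    case False
    have YX: "Y \<subseteq> X" unfolding Y_def using ChD_sub by blast
    have m: "is_matching D Y" unfolding Y_def by (rule ChD_matching) blast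
    have fY: "finite (Yd Y d)" using finite_subset[OF YX finX] by (simp add: Yd_def)
    have "card (Yd Y d) \<le> 1" using m d unfolding is_matching_def by blast
    then have all: "\<forall>a1\<in>Yd Y d. \<forall>a2\<in>Yd Y d. a1 = a2" using card_le_Suc0_iff_eq[OF fY] by simp
    obtain y where "y \<in> Yd Y d" using False by blast
    then have y: "Yd Y d = {y}" using all by blast
    then have cy: "cur Y d = Some y" by (simp add: cur_def)
    have yY: "y \<in> Y" "cD y = d" using y by (auto simp: Yd_iff)
    then have yb: "\<forall>z\<in>Yd (X - R') d. z \<noteq> y \<longrightarrow> (Some y, Some z) \<in> pref d"
      unfolding Y_def ChD_mem by blast
    have xy: "(Some x, Some y) \<in> pref d" using p' cy by simp
    then have "x \<noteq> y" using pref_irr[OF d] by blast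
    then have "(Some y, Some x) \<in> pref d" using yb xA A_def by blast
    then show False using xy pref_asym[OF d] by blast
  qed
qed

lemma cW_nn: "\<forall>z\<in>X. 0 \<le> cW z"
  using X_props by (simp add: less_imp_le)

lemma sum_nonneg_X: "A \<subseteq> X \<Longrightarrow> 0 \<le> (\<Sum>z\<in>A. cW z)"
proof -
  assume A: "A \<subseteq> X"
  show ?thesis
  proof (rule sum_nonneg)
    fix z assume "z \<in> A"
    then have "z \<in> X" using A by blast
    then show "0 \<le> cW z" using X_props[of z] by simp
  qed
qed

lemma inv:
  assumes h: "h \<in> H" and xj: "x \<in> Yh (YY j) h" "x \<notin> ZZ j" and jk: "j \<le> k"
  shows "\<exists>M\<in>Yh (ZZ k) h. key_less (tie h) x M \<and>
     3/2 * B h \<le> cW x + cW M + (\<Sum>z\<in>{z \<in> Yh (ZZ k) h. key_less (tie h) z x}. cW z)"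
  using jk
proof (induction k rule: dec_induct)
  case base
  have S: "Yh (YY j) h \<subseteq> Yh X h" using Y_sub[of j] by (auto simp: Yh_iff)
  have xG: "x \<notin> Chh tie B h (Yh (YY j) h)" using xj(2) Yh_Z[OF h, of j] by (auto simp: Yh_iff)
  obtain M where M: "M \<in> Yh (YY j) h" "M \<in> Chh tie B h (Yh (YY j) h)"
    "\<forall>y\<in>Yh (YY j) h. y \<noteq> M \<longrightarrow> key_less (tie h) y M"
    "\<forall>y\<in>Yh (YY j) h - Chh tie B h (Yh (YY j) h). 3/2 * B h \<le> cW y + cW M +
        (\<Sum>z\<in>{z \<in> Chh tie B h (Yh (YY j) h). key_less (tie h) z y}. cW z)"
    using Chh_props(3)[OF h S] xj(1) by blast
  have "x \<noteq> M" using xG M(2) by blast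
  then have "key_less (tie h) x M" using M(3) xj(1) by blast
  moreover have "3/2 * B h \<le> cW x + cW M + (\<Sum>z\<in>{z \<in> Chh tie B h (Yh (YY j) h). key_less (tie h) z x}. cW z)"
    using M(4) xj(1) xG by blast
  ultimately show ?case using M(2) Yh_Z[OF h, of j] by auto
next
  case (step n)
  then obtain M where M: "M \<in> Yh (ZZ n) h" "key_less (tie h) x M"
    "3/2 * B h \<le> cW x + cW M + (\<Sum>z\<in>{z \<in> Yh (ZZ n) h. key_less (tie h) z x}. cW z)" by blast
  define S where "S = Yh (YY (Suc n)) h"
  define G where "G = Yh (ZZ (Suc n)) h"
  have GC: "G = Chh tie B h S" using Yh_Z[OF h] S_def G_def by simp
  have SX: "S \<subseteq> Yh X h" using Y_sub[of "Suc n"] S_def by (auto simp: Yh_iff)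
  have HS: "Yh (ZZ n) h \<subseteq> S" using Z_next[of n] S_def by (auto simp: Yh_iff)
  have GX: "G \<subseteq> X" using Z_sub[of "Suc n"] Y_sub[of "Suc n"] G_def by (auto simp: Yh_iff)
  have finG: "finite G" using finite_subset[OF GX finX] .
  have MS: "M \<in> S" using M(1) HS by blast
  obtain M' where M': "M' \<in> S" "M' \<in> G" "\<forall>y\<in>S. y \<noteq> M' \<longrightarrow> key_less (tie h) y M'"
    "\<forall>y\<in>S - G. 3/2 * B h \<le> cW y + cW M' + (\<Sum>z\<in>{z \<in> G. key_less (tie h) z y}. cW z)"
    using Chh_props(3)[OF h SX] MS GC by blast
  have trh: "\<forall>a b c. key_less (tie h) a b \<longrightarrow> key_less (tie h) b c \<longrightarrow> key_less (tie h) a c"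
    using lt_tr[OF h] .
  have MM': "M = M' \<or> key_less (tie h) M M'" using M'(3) MS by blast
  then have xM': "key_less (tie h) x M'" using M(2) trh by blast
  have wMM': "cW M \<le> cW M'" using MM' lt_le by (metis order_refl)
  have nn: "\<And>A. A \<subseteq> G \<Longrightarrow> 0 \<le> (\<Sum>z\<in>A. cW z)" using GX sum_nonneg_X by blast
  show ?case
  proof (cases "\<exists>y\<in>S - G. key_less (tie h) y x")
    case True
    then obtain y where y: "y \<in> S - G" "key_less (tie h) y x" by blast
    have b: "3/2 * B h \<le> cW y + cW M' + (\<Sum>z\<in>{z \<in> G. key_less (tie h) z y}. cW z)" using M'(4) y(1) by blast
    have "cW y \<le> cW x" using y(2) lt_le by blast
    moreover have "(\<Sum>z\<in>{z \<in> G. key_less (tie h) z y}. cW z) \<le> (\<Sum>z\<in>{z \<in> G. key_less (tie h) z x}. cW z)"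
    proof (rule sum_mono2)
      show "finite {z \<in> G. key_less (tie h) z x}" using finG by simp
      show "{z \<in> G. key_less (tie h) z y} \<subseteq> {z \<in> G. key_less (tie h) z x}" using y(2) trh by blast
      show "\<And>b. b \<in> {z \<in> G. key_less (tie h) z x} - {z \<in> G. key_less (tie h) z y} \<Longrightarrow> 0 \<le> cW b"
        using GX cW_nn by blast
    qed
    ultimately show ?thesis using b xM' M'(2) G_def by fastforce
  next
    case False
    have "(\<Sum>z\<in>{z \<in> Yh (ZZ n) h. key_less (tie h) z x}. cW z) \<le> (\<Sum>z\<in>{z \<in> G. key_less (tie h) z x}. cW z)"
    proof (rule sum_mono2)
      show "finite {z \<in> G. key_less (tie h) z x}" using finG by simp
      show "{z \<in> Yh (ZZ n) h. key_less (tie h) z x} \<subseteq> {z \<in> G. key_less (tie h) z x}" using False HS by blast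
      show "\<And>b. b \<in> {z \<in> G. key_less (tie h) z x} - {z \<in> Yh (ZZ n) h. key_less (tie h) z x} \<Longrightarrow> 0 \<le> cW b"
        using GX cW_nn by blast
    qed
    then show ?thesis using M(3) wMM' xM' M'(2) G_def by fastforce
  qed
qed

end



context da begin

lemma main: "\<exists>i. YY i = ZZ i \<and> (\<forall>j<i. YY j \<noteq> ZZ j) \<and>
           (\<exists>B'. (\<forall>h\<in>H. B h \<le> B' h \<and> B' h \<le> 3/2 * B h) \<and> stable D H X pref f B' (YY i))"
proof -
  define i where "i = (LEAST i. YY i = ZZ i)"
  have fx: "YY i = ZZ i" unfolding i_def by (rule LeastI_ex) (rule da_term)
  have mn: "\<forall>j<i. YY j \<noteq> ZZ j" unfolding i_def using not_less_Least by blast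
  define Y where "Y = YY i"
  define B' where "B' = (\<lambda>h. max (B h) (wh h Y))"
  have YX: "Y \<subseteq> X" using Y_sub[of i] Y_def by blast
  have YhY: "Yh Y h = Chh tie B h (Yh Y h)" if h: "h \<in> H" for h
    using Yh_Z[OF h, of i] fx Y_def by simp
  have YhX: "Yh Y h \<subseteq> Yh X h" for h using YX by (auto simp: Yh_iff)
  have whY: "wh h Y = (\<Sum>z\<in>Yh Y h. cW z)" for h by (simp add: wh_def)
  have wbound: "wh h Y \<le> 3/2 * B h" if h: "h \<in> H" for h
    using Chh_props(2)[OF h YhX[of h]] YhY[OF h] whY[of h] by simp
  have Bb: "\<forall>h\<in>H. B h \<le> B' h \<and> B' h \<le> 3/2 * B h"
  proof
    fix h assume h: "h \<in> H"
    show "B h \<le> B' h \<and> B' h \<le> 3/2 * B h" using wbound[OF h] B_pos[OF h] unfolding B'_def by simp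
  qed
  have feas: "feasible D H X B' Y"
  proof -
    have "Y = ChD D pref (X - RR i)" using Y_def by (simp add: DA_Y_def)
    then have "is_matching D Y" using ChD_matching[of "X - RR i"] by blast
    moreover have "\<forall>h\<in>H. wh h Y \<le> B' h" unfolding B'_def by simp
    ultimately show ?thesis using YX unfolding feasible_def by blast
  qed
  have finX': "finite A" if "A \<subseteq> X" for A using finite_subset[OF that finX] .
  have noblock: "\<not> (\<exists>h\<in>H. \<exists>Z. blocks D X pref f B' h Z Y)"
  proof
    assume "\<exists>h\<in>H. \<exists>Z. blocks D X pref f B' h Z Y"
    then obtain h Z where h: "h \<in> H" and bl: "blocks D X pref f B' h Z Y" by blast
    have ZX: "Z \<subseteq> Yh X h" and pr: "\<forall>x\<in>Z - Y. (Some x, cur Y (cD x)) \<in> pref (cD x)"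
      and fgt: "f h Z > f h (Yh Y h)" and wZB: "wh h Z \<le> B' h"
      using bl unfolding blocks_def by blast+
    define wY where "wY = (\<Sum>z\<in>Yh Y h. cW z)"
    define wZ where "wZ = (\<Sum>z\<in>Z. cW z)"
    have ZX2: "Z \<subseteq> X" using ZX by (auto simp: Yh_iff)
    have YhX2: "Yh Y h \<subseteq> X" using YX by (auto simp: Yh_iff)
    have finZ: "finite Z" using finX'[OF ZX2] .
    have finYh: "finite (Yh Y h)" using finX'[OF YhX2] .
    have hZ: "\<forall>z\<in>Z. cH z = h" using ZX by (auto simp: Yh_iff)
    have "Yh Z h = Z" using ZX by (auto simp: Yh_iff)
    then have whZ: "wh h Z = wZ" by (simp add: wh_def wZ_def)
    have "Yh (Yh Y h) h = Yh Y h" by (auto simp: Yh_iff)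
    then have whYY: "wh h (Yh Y h) = wY" by (simp add: wh_def wY_def)
    have "f h Z = \<gamma> h * wZ" using f_prop h ZX whZ by simp
    moreover have "f h (Yh Y h) = \<gamma> h * wY" using f_prop h YhX[of h] whYY by simp
    ultimately have "\<gamma> h * wY < \<gamma> h * wZ" using fgt by simp
    then have lt: "wY < wZ" using gamma_pos h by (simp add: mult_less_cancel_left_pos)
    have wZle: "wZ \<le> B' h" using wZB whZ by simp
    have nnX: "0 \<le> cW z" if "z \<in> X" for z using cW_nn that by blast
    show False
    proof (cases "B h \<le> wY")
      case True
      then have "B' h = wY" unfolding B'_def using whY[of h] wY_def by simp
      then show False using wZle lt by simp
    next
      case False
      then have wZB2: "wZ \<le> B h" using wZle unfolding B'_def using whY[of h] wY_def by simp
      have rej: "\<exists>M\<in>Yh Y h. key_less (tie h) x M \<and> 3/2 * B h \<le> cW x + cW M + (\<Sum>z\<in>{z \<in> Yh Y h. key_less (tie h) z x}. cW z)"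
        if x: "x \<in> Z - Y" for x
      proof -
        have xX: "x \<in> X" using x ZX2 by blast
        have "cur Y (cD x) = cur (ChD D pref (X - RR i)) (cD x)" using Y_def by (simp add: DA_Y_def)
        moreover have "(Some x, cur Y (cD x)) \<in> pref (cD x)" using pr x by blast
        ultimately have "x \<in> RR i" using pref_rej[OF xX R_sub[of i]] by metis
        then obtain j where j: "j < i" "x \<in> YY j - ZZ j" using R_rej by blast
        have "x \<in> Yh (YY j) h" using j hZ x by (simp add: Yh_iff)
        then have "\<exists>M\<in>Yh (ZZ i) h. key_less (tie h) x M \<and>
            3/2 * B h \<le> cW x + cW M + (\<Sum>z\<in>{z \<in> Yh (ZZ i) h. key_less (tie h) z x}. cW z)"
          using inv[OF h, of x j i] j by simp
        then show ?thesis using fx Y_def by simp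
      qed
      have bigx: "B h / 2 < cW x \<and> cW x \<le> cW M \<and> x \<noteq> M"
        if x: "x \<in> Z - Y" and M: "M \<in> Yh Y h" "key_less (tie h) x M"
         "3/2 * B h \<le> cW x + cW M + (\<Sum>z\<in>{z \<in> Yh Y h. key_less (tie h) z x}. cW z)" for x M
      proof -
        have nMx: "\<not> key_less (tie h) M x" using M(2) lt_irr[OF h] lt_tr[OF h] by blast
        have "(\<Sum>z\<in>insert M {z \<in> Yh Y h. key_less (tie h) z x}. cW z) \<le> wY"
          unfolding wY_def
        proof (rule sum_mono2[OF finYh])
          show "insert M {z \<in> Yh Y h. key_less (tie h) z x} \<subseteq> Yh Y h" using M(1) by blast
          show "\<And>b. b \<in> Yh Y h - insert M {z \<in> Yh Y h. key_less (tie h) z x} \<Longrightarrow> 0 \<le> cW b"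
            using YhX2 nnX by blast
        qed
        moreover have "(\<Sum>z\<in>insert M {z \<in> Yh Y h. key_less (tie h) z x}. cW z) =
            cW M + (\<Sum>z\<in>{z \<in> Yh Y h. key_less (tie h) z x}. cW z)"
          using nMx finYh by simp
        ultimately have "B h / 2 < cW x" using M(3) False by linarith
        moreover have "cW x \<le> cW M" using M(2) lt_le by blast
        moreover have "x \<noteq> M" using x M(1) by (auto simp: Yh_iff)
        ultimately show ?thesis by blast
      qed
      have "Z - Y \<noteq> {}"
      proof
        assume "Z - Y = {}"
        then have "Z \<subseteq> Yh Y h" using hZ by (auto simp: Yh_iff)
        then have "wZ \<le> wY" unfolding wZ_def wY_def
          using sum_mono2[OF finYh, of Z cW] YhX2 nnX by blast
        then show False using lt by simp
      qed
      then obtain x where x: "x \<in> Z - Y" by blast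
      obtain M where M: "M \<in> Yh Y h" "key_less (tie h) x M"
        "3/2 * B h \<le> cW x + cW M + (\<Sum>z\<in>{z \<in> Yh Y h. key_less (tie h) z x}. cW z)"
        using rej[OF x] by blast
      have bx: "B h / 2 < cW x" "cW x \<le> cW M" "x \<noteq> M" using bigx[OF x M] by blast+
      have pair: "cW a + cW b \<le> wZ" if "a \<in> Z" "b \<in> Z" "a \<noteq> b" for a b
      proof -
        have "(\<Sum>z\<in>{a, b}. cW z) \<le> wZ" unfolding wZ_def
          using sum_mono2[OF finZ, of "{a, b}" cW] that ZX2 nnX by blast
        then show ?thesis using that by simp
      qed
      have single: "Z - Y \<subseteq> {x}"
      proof
        fix x' assume x': "x' \<in> Z - Y"
        show "x' \<in> {x}"
        proof (rule ccontr)
          assume "x' \<notin> {x}"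
          then have "cW x + cW x' \<le> wZ" using pair x x' by auto
          moreover obtain M2 where M2: "M2 \<in> Yh Y h" "key_less (tie h) x' M2"
            "3/2 * B h \<le> cW x' + cW M2 + (\<Sum>z\<in>{z \<in> Yh Y h. key_less (tie h) z x'}. cW z)"
            using rej[OF x'] by blast
          then have "B h / 2 < cW x'" using bigx[OF x' M2] by blast
          ultimately show False using bx wZB2 by linarith
        qed
      qed
      have MZ: "M \<notin> Z"
      proof
        assume "M \<in> Z"
        then have "cW x + cW M \<le> wZ" using pair x bx(3) by blast
        then show False using bx wZB2 by linarith
      qed
      have Zsub: "Z \<subseteq> insert x (Yh Y h - {M})"
      proof
        fix z assume z: "z \<in> Z"
        show "z \<in> insert x (Yh Y h - {M})"
        proof (cases "z \<in> Y")
          case True then show ?thesis using z hZ MZ by (auto simp: Yh_iff)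
        next
          case False then show ?thesis using z single by blast
        qed
      qed
      have xnot: "x \<notin> Yh Y h - {M}" using x by (auto simp: Yh_iff)
      have "wZ \<le> (\<Sum>z\<in>insert x (Yh Y h - {M}). cW z)" unfolding wZ_def
      proof (rule sum_mono2)
        show "finite (insert x (Yh Y h - {M}))" using finYh by simp
        show "Z \<subseteq> insert x (Yh Y h - {M})" by (rule Zsub)
        show "\<And>b. b \<in> insert x (Yh Y h - {M}) - Z \<Longrightarrow> 0 \<le> cW b" using YhX2 nnX x ZX2 by blast
      qed
      also have "\<dots> = cW x + (\<Sum>z\<in>Yh Y h - {M}. cW z)" using xnot finYh by simp
      also have "(\<Sum>z\<in>Yh Y h - {M}. cW z) = wY - cW M"
        unfolding wY_def using sum.remove[OF finYh M(1), of cW] by simp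
      finally have "wZ \<le> cW x + (wY - cW M)" .
      then show False using bx(2) lt by linarith
    qed
  qed
  have "stable D H X pref f B' Y" unfolding stable_def using feas noblock by blast
  then show ?thesis using fx mn Bb Y_def by blast
qed

end

theorem theorem7:
  fixes D :: "'d set" and H :: "'h set" and X :: "('d, 'h) contract set"
    and pref :: "'d \<Rightarrow> (('d, 'h) contract option \<times> ('d, 'h) contract option) set"
    and f :: "'h \<Rightarrow> ('d, 'h) contract set \<Rightarrow> real" and B :: "'h \<Rightarrow> real"
    and \<gamma> :: "'h \<Rightarrow> real"
    and tie :: "'h \<Rightarrow> (('d, 'h) contract \<times> ('d, 'h) contract) set"
  assumes mkt: "market D H X pref f B"
    and gamma_pos: "\<forall>h\<in>H. \<gamma> h > 0"
    and f_prop: "\<forall>h\<in>H. \<forall>Y. Y \<subseteq> Yh X h \<longrightarrow> f h Y = \<gamma> h * wh h Y"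
    and tie_order: "\<forall>h\<in>H. strict_linear_order_on (Yh X h) (tie h)"
  shows "\<exists>i. DA_Y D H X pref tie B i = DA_Z D H X pref tie B i \<and>
           (\<forall>j<i. DA_Y D H X pref tie B j \<noteq> DA_Z D H X pref tie B j) \<and>
           (\<exists>B'. (\<forall>h\<in>H. B h \<le> B' h \<and> B' h \<le> 3/2 * B h) \<and>
                 stable D H X pref f B' (DA_Y D H X pref tie B i))"
  proof -
  interpret da D H X pref f B \<gamma> tie
    using mkt gamma_pos f_prop tie_order by unfold_locales
  show ?thesis using main by blast
qed

end
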